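(* For odd $k\ge3$, let $G_k$ be the join of $k$ pairwise disjoint copies of the edgeless graph on three vertices (so $G_k$ has $3k$ vertices, and two vertices are adjacent iff they lie in different copies). Then $G_k$ is not chordal, $\alpha(G_k)=3$, and $\sum_{I\in\mathscr{C}(G_k)}(-1)^{|I|-1}=1+2^k$. Consequently, for events with $\Pr(A_v)=1$ for all vertices $v$ of $G_k$, the inequality $\Pr(\bigcup_v A_v)\ge\frac{1}{\alpha(G_k)}\sum_{I\in\mathscr{C}(G_k)}(-1)^{|I|-1}\Pr(\bigcap_{i\in I}A_i)$ fails.
   Context: A graph is chordal if it contains no cycle of length four or more as an induced subgraph. $\mathscr{C}(G)$ denotes the clique complex of $G$: the set of all non-empty subsets of vertices that are pairwise adjacent. $\alpha(G)$ denotes the independence number of $G$. *)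

theory Defs
  imports "HOL-Probability.Probability"
begin

text \<open>Simple graphs are given by a vertex set V and a symmetric irreflexive
adjacency relation E.\<close>

definition induced_cycle :: "'v set \<Rightarrow> ('v \<Rightarrow> 'v \<Rightarrow> bool) \<Rightarrow> 'v list \<Rightarrow> bool" where
  "induced_cycle V E cs \<longleftrightarrow>
     length cs \<ge> 4 \<and> distinct cs \<and> set cs \<subseteq> V \<and>
     (\<forall>i < length cs. \<forall>j < length cs.
        E (cs ! i) (cs ! j) \<longleftrightarrow> (j = Suc i mod length cs \<or> i = Suc j mod length cs))"

definition chordal :: "'v set \<Rightarrow> ('v \<Rightarrow> 'v \<Rightarrow> bool) \<Rightarrow> bool" where
  "chordal V E \<longleftrightarrow> \<not> (\<exists>cs. induced_cycle V E cs)"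

definition clique_complex :: "'v set \<Rightarrow> ('v \<Rightarrow> 'v \<Rightarrow> bool) \<Rightarrow> 'v set set" where
  "clique_complex V E = {I. I \<noteq> {} \<and> I \<subseteq> V \<and> (\<forall>u\<in>I. \<forall>v\<in>I. u \<noteq> v \<longrightarrow> E u v)}"

definition independent_set :: "'v set \<Rightarrow> ('v \<Rightarrow> 'v \<Rightarrow> bool) \<Rightarrow> 'v set \<Rightarrow> bool" where
  "independent_set V E S \<longleftrightarrow> S \<subseteq> V \<and> (\<forall>u\<in>S. \<forall>v\<in>S. \<not> E u v)"

definition independence_number :: "'v set \<Rightarrow> ('v \<Rightarrow> 'v \<Rightarrow> bool) \<Rightarrow> nat" where
  "independence_number V E = Max {card S | S. independent_set V E S}"

text \<open>G_k: the join of k disjoint copies of the edgeless graph on three vertices.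
Vertex (i,j) is vertex j of copy i; vertices are adjacent iff in different copies.\<close>
definition Gk_V :: "nat \<Rightarrow> (nat \<times> nat) set" where
  "Gk_V k = {0..<k} \<times> {0..<3}"

definition Gk_E :: "nat \<times> nat \<Rightarrow> nat \<times> nat \<Rightarrow> bool" where
  "Gk_E u v \<longleftrightarrow> fst u \<noteq> fst v"

end

theory Submission
  imports Defs
begin

definition cl :: "nat \<Rightarrow> (nat \<times> nat) set set" where
  "cl n = {I. I \<subseteq> Gk_V n \<and> (\<forall>u\<in>I. \<forall>v\<in>I. u \<noteq> v \<longrightarrow> fst u \<noteq> fst v)}"

lemma finite_Gk_V[simp]: "finite (Gk_V n)"
  by (simp add: Gk_V_def)

lemma finite_cl: "finite (cl n)"
  by (rule finite_subset[of _ "Pow (Gk_V n)"]) (auto simp: cl_def)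

lemma cl_mem_finite: "I \<in> cl n \<Longrightarrow> finite I"
proof -
  assume "I \<in> cl n"
  then have "I \<subseteq> Gk_V n" by (simp add: cl_def)
  then show "finite I" by (rule finite_subset) simp
qed

lemma cl_Suc: "cl (Suc n) = cl n \<union> (\<Union>j\<in>{0..<3}. insert (n,j) ` cl n)"
proof
  show "cl (Suc n) \<subseteq> cl n \<union> (\<Union>j\<in>{0..<3}. insert (n,j) ` cl n)"
  proof
    fix I assume I: "I \<in> cl (Suc n)"
    show "I \<in> cl n \<union> (\<Union>j\<in>{0..<3}. insert (n,j) ` cl n)"
    proof (cases "\<exists>u\<in>I. fst u = n")
      case False
      then have "I \<in> cl n" using I by (force simp: cl_def Gk_V_def less_Suc_eq)
      then show ?thesis by blast
    next
      case True
      then obtain j where u: "(n,j) \<in> I" by auto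
      then have j: "j < 3" using I by (auto simp: cl_def Gk_V_def)
      have "I - {(n,j)} \<in> cl n" unfolding cl_def
      proof (intro CollectI conjI ballI impI subsetI)
        fix v assume v: "v \<in> I - {(n,j)}"
        then have vI: "v \<in> I" and vne: "v \<noteq> (n,j)" by auto
        have "fst v \<noteq> n" using I u vI vne unfolding cl_def by fastforce
        moreover have "fst v < Suc n" "snd v < 3" using I vI by (auto simp: cl_def Gk_V_def)
        ultimately show "v \<in> Gk_V n" by (cases v) (auto simp: Gk_V_def)
      next
        fix a b assume "a \<in> I - {(n,j)}" "b \<in> I - {(n,j)}" "a \<noteq> b"
        then show "fst a \<noteq> fst b" using I unfolding cl_def by blast
      qed
      moreover have "I = insert (n,j) (I - {(n,j)})" using u by (simp add: insert_absorb)
      ultimately have "I \<in> insert (n,j) ` cl n" by (metis image_eqI)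
      moreover have "j \<in> {0..<3}" using j by simp
      ultimately show ?thesis by (intro UnI2 UN_I)
    qed
  qed
next
  show "cl n \<union> (\<Union>j\<in>{0..<3}. insert (n,j) ` cl n) \<subseteq> cl (Suc n)"
    by (force simp: cl_def Gk_V_def)
qed

lemma cl_sum: "(\<Sum>I\<in>cl n. (-1::int) ^ card I) = (-2) ^ n"
proof (induction n)
  case 0
  have "cl 0 = {{}}" by (auto simp: cl_def Gk_V_def)
  then show ?case by simp
next
  case (Suc n)
  have notin: "\<And>I j. I \<in> cl n \<Longrightarrow> (n,j) \<notin> I" by (auto simp: cl_def Gk_V_def)
  have inj: "\<And>j. inj_on (insert (n,j)) (cl n)"
  proof (rule inj_onI)
    fix j I J assume "I \<in> cl n" "J \<in> cl n" "insert (n,j) I = insert (n,j) J"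
    then show "I = J" using notin by (metis insert_ident)
  qed
  have fin: "\<And>j. finite (insert (n,j) ` cl n)" using finite_cl by blast
  have disj1: "cl n \<inter> (\<Union>j\<in>{0..<3}. insert (n,j) ` cl n) = {}"
    using notin by auto
  have disj2: "\<forall>i\<in>{0..<3::nat}. \<forall>j\<in>{0..<3}. i \<noteq> j \<longrightarrow>
      insert (n,i) ` cl n \<inter> insert (n,j) ` cl n = {}"
  proof (intro ballI impI)
    fix i j :: nat assume ij: "i \<noteq> j"
    show "insert (n,i) ` cl n \<inter> insert (n,j) ` cl n = {}"
    proof (rule ccontr)
      assume "insert (n,i) ` cl n \<inter> insert (n,j) ` cl n \<noteq> {}"
      then obtain I J where IJ: "I \<in> cl n" "J \<in> cl n" "insert (n,i) I = insert (n,j) J" by auto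
      then have "(n,i) \<in> insert (n,j) J" by blast
      then show False using ij notin[OF IJ(2)] by auto
    qed
  qed
  have each: "(\<Sum>I\<in>insert (n,j) ` cl n. (-1::int) ^ card I) = - ((-2) ^ n)" for j
  proof -
    have "(\<Sum>I\<in>insert (n,j) ` cl n. (-1::int) ^ card I)
        = (\<Sum>I\<in>cl n. (-1::int) ^ card (insert (n,j) I))"
      by (rule sum.reindex[OF inj, unfolded comp_def])
    also have "\<dots> = (\<Sum>I\<in>cl n. - ((-1::int) ^ card I))"
      by (rule sum.cong) (auto simp: notin cl_mem_finite)
    also have "\<dots> = - ((-2) ^ n)" using Suc by (simp add: sum_negf)
    finally show ?thesis .
  qed
  have "(\<Sum>I\<in>cl (Suc n). (-1::int) ^ card I)
      = (\<Sum>I\<in>cl n. (-1::int) ^ card I) + (\<Sum>I\<in>(\<Union>j\<in>{0..<3}. insert (n,j) ` cl n). (-1::int) ^ card I)"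
    unfolding cl_Suc by (rule sum.union_disjoint) (use finite_cl fin disj1 in auto)
  also have "(\<Sum>I\<in>(\<Union>j\<in>{0..<3}. insert (n,j) ` cl n). (-1::int) ^ card I)
      = (\<Sum>j\<in>{0..<3}. \<Sum>I\<in>insert (n,j) ` cl n. (-1::int) ^ card I)"
    by (rule sum.UNION_disjoint) (use fin disj2 in auto)
  finally show ?case using Suc by (simp add: each)
qed

lemma cc_eq: "clique_complex (Gk_V n) Gk_E = cl n - {{}}"
  by (auto simp: clique_complex_def cl_def Gk_E_def)

lemma cc_sum: "(\<Sum>I\<in>clique_complex (Gk_V n) Gk_E. (-1::int) ^ (card I - 1)) = 1 - (-2) ^ n"
proof -
  have e: "{} \<in> cl n" by (simp add: cl_def)
  have "(\<Sum>I\<in>cl n - {{}}. (-1::int) ^ (card I - 1)) = (\<Sum>I\<in>cl n - {{}}. - ((-1::int) ^ card I))"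
  proof (rule sum.cong)
    fix I assume "I \<in> cl n - {{}}"
    then have "card I \<ge> 1" using cl_mem_finite by (auto simp: Suc_le_eq card_gt_0_iff)
    then obtain m where "card I = Suc m" by (cases "card I") auto
    then show "(-1::int) ^ (card I - 1) = - ((-1::int) ^ card I)" by simp
  qed simp
  also have "\<dots> = - ((\<Sum>I\<in>cl n. (-1::int) ^ card I) - 1)"
    using sum.remove[OF finite_cl e, of "\<lambda>I. (-1::int) ^ card I"] by (simp add: sum_negf)
  finally show ?thesis by (simp add: cc_eq cl_sum)
qed

lemma not_chordal: "k \<ge> 2 \<Longrightarrow> \<not> chordal (Gk_V k) Gk_E"
  unfolding chordal_def
proof -
  assume k: "k \<ge> 2"
  let ?cs = "[(0::nat,0::nat),(1,0),(0,1),(1,1)]"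
  have "induced_cycle (Gk_V k) Gk_E ?cs"
    unfolding induced_cycle_def using k
    by (simp add: All_less_Suc2 Gk_V_def Gk_E_def)
  then show "\<not> \<not> (\<exists>cs. induced_cycle (Gk_V k) Gk_E cs)" by blast
qed

lemma indep_card: "independent_set (Gk_V k) Gk_E S \<Longrightarrow> card S \<le> 3"
proof -
  assume S: "independent_set (Gk_V k) Gk_E S"
  show "card S \<le> 3"
  proof (cases "S = {}")
    case False
    then obtain u where u: "u \<in> S" by auto
    have "S \<subseteq> {fst u} \<times> {0..<3}"
    proof
      fix v assume v: "v \<in> S"
      have "fst v = fst u" using S u v unfolding independent_set_def Gk_E_def by blast
      moreover have "snd v < 3" using S v unfolding independent_set_def Gk_V_def by auto
      ultimately show "v \<in> {fst u} \<times> {0..<3}" by (cases v) auto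
    qed
    then have "card S \<le> card ({fst u} \<times> {0..<3::nat})" by (rule card_mono[rotated]) simp
    then show ?thesis by simp
  qed simp
qed

lemma indep_num: "k \<ge> 1 \<Longrightarrow> independence_number (Gk_V k) Gk_E = 3"
proof -
  assume k: "k \<ge> 1"
  let ?X = "{card S | S. independent_set (Gk_V k) Gk_E S}"
  have "independent_set (Gk_V k) Gk_E {(0,0),(0,1),(0,2)}"
    using k by (auto simp: independent_set_def Gk_V_def Gk_E_def)
  moreover have "card {(0::nat,0::nat),(0,1),(0,2)} = 3" by simp
  ultimately have "3 \<in> ?X" by force
  moreover have "finite ?X" by (rule finite_subset[of _ "{..3}"]) (auto dest: indep_card)
  moreover have "\<forall>x\<in>?X. x \<le> 3" using indep_card by auto
  ultimately show ?thesis unfolding independence_number_def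
    by (intro Max_eqI) auto
qed

theorem mainTheorem11:
  fixes k :: nat
  assumes "odd k" and "k \<ge> 3"
  shows "\<not> chordal (Gk_V k) Gk_E
    \<and> independence_number (Gk_V k) Gk_E = 3
    \<and> (\<Sum>I\<in>clique_complex (Gk_V k) Gk_E. (-1::int) ^ (card I - 1)) = 1 + 2 ^ k
    \<and> (\<forall>(M :: 'a measure) (A :: nat \<times> nat \<Rightarrow> 'a set).
          prob_space M \<and> (\<forall>v\<in>Gk_V k. A v \<in> sets M \<and> measure M (A v) = 1) \<longrightarrow>
          \<not> (measure M (\<Union>v\<in>Gk_V k. A v) \<ge>
               1 / real (independence_number (Gk_V k) Gk_E) *
               (\<Sum>I\<in>clique_complex (Gk_V k) Gk_E.
                  (-1::real) ^ (card I - 1) * measure M (\<Inter>i\<in>I. A i))))"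
proof -
  have S: "(\<Sum>I\<in>clique_complex (Gk_V k) Gk_E. (-1::int) ^ (card I - 1)) = 1 + 2 ^ k"
    unfolding cc_sum using assms(1) by (simp add: power_minus_odd)
  have N: "independence_number (Gk_V k) Gk_E = 3" using assms by (intro indep_num) auto
  have P: "\<not> (measure M (\<Union>v\<in>Gk_V k. A v) \<ge>
               1 / real (independence_number (Gk_V k) Gk_E) *
               (\<Sum>I\<in>clique_complex (Gk_V k) Gk_E.
                  (-1::real) ^ (card I - 1) * measure M (\<Inter>i\<in>I. A i)))"
    if M: "prob_space M" and A: "\<forall>v\<in>Gk_V k. A v \<in> sets M \<and> measure M (A v) = 1"
    for M :: "'a measure" and A
  proof -
    interpret prob_space M by (rule M)
    have one: "measure M (\<Inter>i\<in>I. A i) = 1" if I: "I \<in> clique_complex (Gk_V k) Gk_E" for I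
    proof -
      have IV: "I \<subseteq> Gk_V k" "I \<noteq> {}" using I by (auto simp: clique_complex_def)
      have fI: "finite I" using finite_subset[OF IV(1) finite_Gk_V] .
      have ae: "AE x in M. \<forall>i\<in>I. x \<in> A i"
        using fI proof (rule AE_finite_allI)
        fix i assume "i \<in> I"
        then show "AE x in M. x \<in> A i" using A IV by (auto intro: AE_prob_1)
      qed
      have "(\<Inter>i\<in>I. A i) \<in> sets M" using A IV fI by (intro sets.finite_INT) auto
      then show ?thesis using ae by (subst prob_eq_1) auto
    qed
    have "(\<Sum>I\<in>clique_complex (Gk_V k) Gk_E. (-1::real) ^ (card I - 1) * measure M (\<Inter>i\<in>I. A i))
        = (\<Sum>I\<in>clique_complex (Gk_V k) Gk_E. real_of_int ((-1::int) ^ (card I - 1)))"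
      by (rule sum.cong) (auto simp: one)
    also have "\<dots> = 1 + 2 ^ k" unfolding of_int_sum[symmetric] S by simp
    finally have eq: "(\<Sum>I\<in>clique_complex (Gk_V k) Gk_E. (-1::real) ^ (card I - 1) * measure M (\<Inter>i\<in>I. A i)) = 1 + 2 ^ k" .
    have "(2::real) ^ 3 \<le> 2 ^ k" using assms(2) by (intro power_increasing) auto
    then have gt: "1 < 1 / real (3::nat) * (1 + (2::real) ^ k)" by simp
    have "measure M (\<Union>v\<in>Gk_V k. A v) \<le> 1" by (rule prob_le_1)
    then show ?thesis unfolding eq N using gt by linarith
  qed
  show ?thesis using not_chordal[of k] assms S N P by auto
qed

end
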